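(* For every integer $n>1$, $$c_n(231,1423 : 231)=c_n(312,2314 : 312)=\begin{cases}\frac{7}{3}\cdot 4^{k-1}-\frac{1}{3} & \text{if } n=2k,\\ \frac{14}{3}\cdot 4^{k-1}-\frac{2}{3} & \text{if } n=2k+1.\end{cases}$$
   Context: $S_n$ is the symmetric group on $[n]=\{1,\dots,n\}$, and a permutation $\pi\in S_n$ is written in one-line notation $\pi=\pi_1\pi_2\cdots\pi_n$ with $\pi_i=\pi(i)$. For $\tau\in S_k$, $k\le n$, $\pi$ contains $\tau$ if there are indices $i_1<\dots<i_k$ with $\pi_{i_s}>\pi_{i_t}$ iff $\tau_s>\tau_t$ for all $1\le s<t\le k$; otherwise $\pi$ avoids $\tau$. $\pi^2$ denotes the composition $\pi\circ\pi$. For patterns $\sigma_1,\sigma_2,\rho$, $c_n(\sigma_1,\sigma_2 : \rho)$ denotes the number of permutations $\pi\in S_n$ such that $\pi$ avoids both $\sigma_1$ and $\sigma_2$ and $\pi^2$ avoids $\rho$. *)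

theory Defs
  imports Complex_Main "HOL-Combinatorics.Permutations"
begin

text \<open>A pattern tau in S_k is given by its one-line notation as a list
  [tau_1, ..., tau_k] (0-indexed list, values in {1..k}).\<close>

definition perms :: "nat \<Rightarrow> (nat \<Rightarrow> nat) set" where
  "perms n = {p. p permutes {1..n}}"

definition contains :: "nat \<Rightarrow> (nat \<Rightarrow> nat) \<Rightarrow> nat list \<Rightarrow> bool" where
  "contains n p tau \<longleftrightarrow>
     (\<exists>i :: nat \<Rightarrow> nat.
        (\<forall>s t. 1 \<le> s \<and> s < t \<and> t \<le> length tau \<longrightarrow> i s < i t) \<and>
        (\<forall>s. 1 \<le> s \<and> s \<le> length tau \<longrightarrow> i s \<in> {1..n}) \<and>
        (\<forall>s t. 1 \<le> s \<and> s < t \<and> t \<le> length tau \<longrightarrow>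
            (p (i s) > p (i t) \<longleftrightarrow> tau ! (s - 1) > tau ! (t - 1))))"

definition avoids :: "nat \<Rightarrow> (nat \<Rightarrow> nat) \<Rightarrow> nat list \<Rightarrow> bool" where
  "avoids n p tau \<longleftrightarrow> \<not> contains n p tau"

definition c :: "nat \<Rightarrow> nat list \<Rightarrow> nat list \<Rightarrow> nat list \<Rightarrow> nat" where
  "c n s1 s2 rho = card {p \<in> perms n. avoids n p s1 \<and> avoids n p s2 \<and> avoids n (p \<circ> p) rho}"

end

theory Submission
  imports Defs
begin

lemma contains_E:
  assumes "contains n p tau"
  obtains i where "\<And>s t. 1 \<le> s \<Longrightarrow> s < t \<Longrightarrow> t \<le> length tau \<Longrightarrow> i s < i t"
    "\<And>s. 1 \<le> s \<Longrightarrow> s \<le> length tau \<Longrightarrow> 1 \<le> i s \<and> i s \<le> n"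
    "\<And>s t. 1 \<le> s \<Longrightarrow> s < t \<Longrightarrow> t \<le> length tau \<Longrightarrow> (p (i s) > p (i t) \<longleftrightarrow> tau ! (s - 1) > tau ! (t - 1))"
  using assms unfolding contains_def atLeastAtMost_iff by blast

lemma c231:
  assumes "inj_on p {1..n}"
  shows "contains n p [2,3,1] \<longleftrightarrow> (\<exists>a b c. 1 \<le> a \<and> a < b \<and> b < c \<and> c \<le> n \<and> p c < p a \<and> p a < p b)"
proof
  assume A: "contains n p [2,3,1]"
  obtain i where h1: "\<And>s t::nat. 1 \<le> s \<Longrightarrow> s < t \<Longrightarrow> t \<le> length [2,3,1::nat] \<Longrightarrow> i s < i t"
    and h2: "\<And>s::nat. 1 \<le> s \<Longrightarrow> s \<le> length [2,3,1::nat] \<Longrightarrow> 1 \<le> i s \<and> i s \<le> n"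
    and h3: "\<And>s t::nat. 1 \<le> s \<Longrightarrow> s < t \<Longrightarrow> t \<le> length [2,3,1::nat] \<Longrightarrow> (p (i s) > p (i t) \<longleftrightarrow> [2,3,1::nat] ! (s - 1) > [2,3,1::nat] ! (t - 1))"
    using contains_E[OF A] by blast
  have a: "i 1 < i 2" "i 2 < i 3" using h1 by auto
  have b: "1 \<le> i 1" "i 3 \<le> n" "i 2 \<le> n" "i 1 \<le> n" using h2 by auto
  have c: "\<not> p (i 1) > p (i 2)" "p (i 1) > p (i 3)" "p (i 2) > p (i 3)"
    using h3[of 1 2] h3[of 1 3] h3[of 2 3] by auto
  have m: "i 1 \<in> {1..n}" "i 2 \<in> {1..n}" "i 3 \<in> {1..n}" using a b by auto
  have "p (i 1) \<noteq> p (i 2)" using inj_onD[OF assms _ m(1) m(2)] a by auto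
  then show "\<exists>a b c. 1 \<le> a \<and> a < b \<and> b < c \<and> c \<le> n \<and> p c < p a \<and> p a < p b"
    using a b c by (intro exI[of _ "i 1"] exI[of _ "i 2"] exI[of _ "i 3"]) auto
next
  assume "\<exists>a b c. 1 \<le> a \<and> a < b \<and> b < c \<and> c \<le> n \<and> p c < p a \<and> p a < p b"
  then obtain a b c where h: "1 \<le> a" "a < b" "b < c" "c \<le> n" "p c < p a" "p a < p b" by blast
  define i where "i = (\<lambda>x::nat. if x = 1 then a else if x = 2 then b else c)"
  have st: "\<And>s t. 1 \<le> s \<and> s < t \<and> t \<le> 3 \<Longrightarrow> (s = 1 \<and> t = 2) \<or> (s = 1 \<and> t = 3) \<or> (s = 2 \<and> t = (3::nat))" by auto
  have s3: "\<And>s. 1 \<le> s \<and> s \<le> 3 \<Longrightarrow> s = 1 \<or> s = 2 \<or> s = (3::nat)" by auto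
  show "contains n p [2,3,1]" unfolding contains_def
  proof (intro exI[of _ i] conjI allI impI)
    fix s t :: nat assume "1 \<le> s \<and> s < t \<and> t \<le> length [2,3,1::nat]"
    then have "(s = 1 \<and> t = 2) \<or> (s = 1 \<and> t = 3) \<or> (s = 2 \<and> t = 3)" using st by simp
    then show "i s < i t" using h by (elim disjE) (simp_all add: i_def)
  next
    fix s :: nat assume "1 \<le> s \<and> s \<le> length [2,3,1::nat]"
    then have "s = 1 \<or> s = 2 \<or> s = 3" using s3 by simp
    then show "i s \<in> {1..n}" using h by (elim disjE) (simp_all add: i_def)
  next
    fix s t :: nat assume "1 \<le> s \<and> s < t \<and> t \<le> length [2,3,1::nat]"
    then have "(s = 1 \<and> t = 2) \<or> (s = 1 \<and> t = 3) \<or> (s = 2 \<and> t = 3)" using st by simp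
    then show "(p (i s) > p (i t) \<longleftrightarrow> [2,3,1::nat] ! (s - 1) > [2,3,1::nat] ! (t - 1))"
      using h by (elim disjE) (simp_all add: i_def)
  qed
qed

lemma c312:
  assumes "inj_on p {1..n}"
  shows "contains n p [3,1,2] \<longleftrightarrow> (\<exists>a b c. 1 \<le> a \<and> a < b \<and> b < c \<and> c \<le> n \<and> p b < p c \<and> p c < p a)"
proof
  assume A: "contains n p [3,1,2]"
  obtain i where h1: "\<And>s t::nat. 1 \<le> s \<Longrightarrow> s < t \<Longrightarrow> t \<le> length [3,1,2::nat] \<Longrightarrow> i s < i t"
    and h2: "\<And>s::nat. 1 \<le> s \<Longrightarrow> s \<le> length [3,1,2::nat] \<Longrightarrow> 1 \<le> i s \<and> i s \<le> n"
    and h3: "\<And>s t::nat. 1 \<le> s \<Longrightarrow> s < t \<Longrightarrow> t \<le> length [3,1,2::nat] \<Longrightarrow> (p (i s) > p (i t) \<longleftrightarrow> [3,1,2::nat] ! (s - 1) > [3,1,2::nat] ! (t - 1))"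
    using contains_E[OF A] by blast
  have a: "i 1 < i 2" "i 2 < i 3" using h1 by auto
  have b: "1 \<le> i 1" "i 3 \<le> n" "i 2 \<le> n" "i 1 \<le> n" using h2 by auto
  have c: "p (i 1) > p (i 2)" "p (i 1) > p (i 3)" "\<not> p (i 2) > p (i 3)"
    using h3[of 1 2] h3[of 1 3] h3[of 2 3] by auto
  have m: "i 1 \<in> {1..n}" "i 2 \<in> {1..n}" "i 3 \<in> {1..n}" using a b by auto
  have "p (i 2) \<noteq> p (i 3)" using inj_onD[OF assms _ m(2) m(3)] a by auto
  then show "\<exists>a b c. 1 \<le> a \<and> a < b \<and> b < c \<and> c \<le> n \<and> p b < p c \<and> p c < p a"
    using a b c by (intro exI[of _ "i 1"] exI[of _ "i 2"] exI[of _ "i 3"]) auto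
next
  assume "\<exists>a b c. 1 \<le> a \<and> a < b \<and> b < c \<and> c \<le> n \<and> p b < p c \<and> p c < p a"
  then obtain a b c where h: "1 \<le> a" "a < b" "b < c" "c \<le> n" "p b < p c" "p c < p a" by blast
  define i where "i = (\<lambda>x::nat. if x = 1 then a else if x = 2 then b else c)"
  have st: "\<And>s t. 1 \<le> s \<and> s < t \<and> t \<le> 3 \<Longrightarrow> (s = 1 \<and> t = 2) \<or> (s = 1 \<and> t = 3) \<or> (s = 2 \<and> t = (3::nat))" by auto
  have s3: "\<And>s. 1 \<le> s \<and> s \<le> 3 \<Longrightarrow> s = 1 \<or> s = 2 \<or> s = (3::nat)" by auto
  show "contains n p [3,1,2]" unfolding contains_def
  proof (intro exI[of _ i] conjI allI impI)
    fix s t :: nat assume "1 \<le> s \<and> s < t \<and> t \<le> length [3,1,2::nat]"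
    then have "(s = 1 \<and> t = 2) \<or> (s = 1 \<and> t = 3) \<or> (s = 2 \<and> t = 3)" using st by simp
    then show "i s < i t" using h by (elim disjE) (simp_all add: i_def)
  next
    fix s :: nat assume "1 \<le> s \<and> s \<le> length [3,1,2::nat]"
    then have "s = 1 \<or> s = 2 \<or> s = 3" using s3 by simp
    then show "i s \<in> {1..n}" using h by (elim disjE) (simp_all add: i_def)
  next
    fix s t :: nat assume "1 \<le> s \<and> s < t \<and> t \<le> length [3,1,2::nat]"
    then have "(s = 1 \<and> t = 2) \<or> (s = 1 \<and> t = 3) \<or> (s = 2 \<and> t = 3)" using st by simp
    then show "(p (i s) > p (i t) \<longleftrightarrow> [3,1,2::nat] ! (s - 1) > [3,1,2::nat] ! (t - 1))"
      using h by (elim disjE) (simp_all add: i_def)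
  qed
qed

lemma c1423:
  assumes "inj_on p {1..n}"
  shows "contains n p [1,4,2,3] \<longleftrightarrow> (\<exists>a b c d. 1 \<le> a \<and> a < b \<and> b < c \<and> c < d \<and> d \<le> n \<and> p a < p c \<and> p c < p d \<and> p d < p b)"
proof
  assume A: "contains n p [1,4,2,3]"
  obtain i where h1: "\<And>s t::nat. 1 \<le> s \<Longrightarrow> s < t \<Longrightarrow> t \<le> length [1,4,2,3::nat] \<Longrightarrow> i s < i t"
    and h2: "\<And>s::nat. 1 \<le> s \<Longrightarrow> s \<le> length [1,4,2,3::nat] \<Longrightarrow> 1 \<le> i s \<and> i s \<le> n"
    and h3: "\<And>s t::nat. 1 \<le> s \<Longrightarrow> s < t \<Longrightarrow> t \<le> length [1,4,2,3::nat] \<Longrightarrow> (p (i s) > p (i t) \<longleftrightarrow> [1,4,2,3::nat] ! (s - 1) > [1,4,2,3::nat] ! (t - 1))"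
    using contains_E[OF A] by blast
  have a: "i 1 < i 2" "i 2 < i 3" "i 3 < i 4" using h1 by auto
  have b: "1 \<le> i 1" "i 4 \<le> n" using h2 by auto
  have c: "\<not> p (i 1) > p (i 3)" "\<not> p (i 3) > p (i 4)" "p (i 2) > p (i 4)"
    using h3[of 1 3] h3[of 3 4] h3[of 2 4] by auto
  have m: "i 1 \<in> {1..n}" "i 2 \<in> {1..n}" "i 3 \<in> {1..n}" "i 4 \<in> {1..n}" using a b by auto
  have "p (i 1) \<noteq> p (i 3)" "p (i 3) \<noteq> p (i 4)"
    using inj_onD[OF assms _ m(1) m(3)] inj_onD[OF assms _ m(3) m(4)] a by auto
  then show "\<exists>a b c d. 1 \<le> a \<and> a < b \<and> b < c \<and> c < d \<and> d \<le> n \<and> p a < p c \<and> p c < p d \<and> p d < p b"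
    using a b c by (intro exI[of _ "i 1"] exI[of _ "i 2"] exI[of _ "i 3"] exI[of _ "i 4"]) auto
next
  assume "\<exists>a b c d. 1 \<le> a \<and> a < b \<and> b < c \<and> c < d \<and> d \<le> n \<and> p a < p c \<and> p c < p d \<and> p d < p b"
  then obtain a b c d where h: "1 \<le> a" "a < b" "b < c" "c < d" "d \<le> n" "p a < p c" "p c < p d" "p d < p b" by blast
  define i where "i = (\<lambda>x::nat. if x = 1 then a else if x = 2 then b else if x = 3 then c else d)"
  have st: "\<And>s t. 1 \<le> s \<and> s < t \<and> t \<le> 4 \<Longrightarrow> (s = 1 \<and> t = 2) \<or> (s = 1 \<and> t = 3) \<or> (s = 1 \<and> t = 4) \<or> (s = 2 \<and> t = 3) \<or> (s = 2 \<and> t = 4) \<or> (s = 3 \<and> t = (4::nat))" by auto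
  have s3: "\<And>s. 1 \<le> s \<and> s \<le> 4 \<Longrightarrow> s = 1 \<or> s = 2 \<or> s = 3 \<or> s = (4::nat)" by auto
  show "contains n p [1,4,2,3]" unfolding contains_def
  proof (intro exI[of _ i] conjI allI impI)
    fix s t :: nat assume "1 \<le> s \<and> s < t \<and> t \<le> length [1,4,2,3::nat]"
    then have "(s = 1 \<and> t = 2) \<or> (s = 1 \<and> t = 3) \<or> (s = 1 \<and> t = 4) \<or> (s = 2 \<and> t = 3) \<or> (s = 2 \<and> t = 4) \<or> (s = 3 \<and> t = 4)" using st by simp
    then show "i s < i t" using h by (elim disjE) (simp_all add: i_def)
  next
    fix s :: nat assume "1 \<le> s \<and> s \<le> length [1,4,2,3::nat]"
    then have "s = 1 \<or> s = 2 \<or> s = 3 \<or> s = 4" using s3 by simp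
    then show "i s \<in> {1..n}" using h by (elim disjE) (simp_all add: i_def)
  next
    fix s t :: nat assume "1 \<le> s \<and> s < t \<and> t \<le> length [1,4,2,3::nat]"
    then have "(s = 1 \<and> t = 2) \<or> (s = 1 \<and> t = 3) \<or> (s = 1 \<and> t = 4) \<or> (s = 2 \<and> t = 3) \<or> (s = 2 \<and> t = 4) \<or> (s = 3 \<and> t = 4)" using st by simp
    then show "(p (i s) > p (i t) \<longleftrightarrow> [1,4,2,3::nat] ! (s - 1) > [1,4,2,3::nat] ! (t - 1))"
      using h by (elim disjE) (simp_all add: i_def)
  qed
qed

lemma c2314:
  assumes "inj_on p {1..n}"
  shows "contains n p [2,3,1,4] \<longleftrightarrow> (\<exists>a b c d. 1 \<le> a \<and> a < b \<and> b < c \<and> c < d \<and> d \<le> n \<and> p c < p a \<and> p a < p b \<and> p b < p d)"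
proof
  assume A: "contains n p [2,3,1,4]"
  obtain i where h1: "\<And>s t::nat. 1 \<le> s \<Longrightarrow> s < t \<Longrightarrow> t \<le> length [2,3,1,4::nat] \<Longrightarrow> i s < i t"
    and h2: "\<And>s::nat. 1 \<le> s \<Longrightarrow> s \<le> length [2,3,1,4::nat] \<Longrightarrow> 1 \<le> i s \<and> i s \<le> n"
    and h3: "\<And>s t::nat. 1 \<le> s \<Longrightarrow> s < t \<Longrightarrow> t \<le> length [2,3,1,4::nat] \<Longrightarrow> (p (i s) > p (i t) \<longleftrightarrow> [2,3,1,4::nat] ! (s - 1) > [2,3,1,4::nat] ! (t - 1))"
    using contains_E[OF A] by blast
  have a: "i 1 < i 2" "i 2 < i 3" "i 3 < i 4" using h1 by auto
  have b: "1 \<le> i 1" "i 4 \<le> n" using h2 by auto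
  have c: "p (i 1) > p (i 3)" "\<not> p (i 1) > p (i 2)" "\<not> p (i 2) > p (i 4)"
    using h3[of 1 3] h3[of 1 2] h3[of 2 4] by auto
  have m: "i 1 \<in> {1..n}" "i 2 \<in> {1..n}" "i 3 \<in> {1..n}" "i 4 \<in> {1..n}" using a b by auto
  have "p (i 1) \<noteq> p (i 2)" "p (i 2) \<noteq> p (i 4)"
    using inj_onD[OF assms _ m(1) m(2)] inj_onD[OF assms _ m(2) m(4)] a by auto
  then show "\<exists>a b c d. 1 \<le> a \<and> a < b \<and> b < c \<and> c < d \<and> d \<le> n \<and> p c < p a \<and> p a < p b \<and> p b < p d"
    using a b c by (intro exI[of _ "i 1"] exI[of _ "i 2"] exI[of _ "i 3"] exI[of _ "i 4"]) auto
next
  assume "\<exists>a b c d. 1 \<le> a \<and> a < b \<and> b < c \<and> c < d \<and> d \<le> n \<and> p c < p a \<and> p a < p b \<and> p b < p d"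
  then obtain a b c d where h: "1 \<le> a" "a < b" "b < c" "c < d" "d \<le> n" "p c < p a" "p a < p b" "p b < p d" by blast
  define i where "i = (\<lambda>x::nat. if x = 1 then a else if x = 2 then b else if x = 3 then c else d)"
  have st: "\<And>s t. 1 \<le> s \<and> s < t \<and> t \<le> 4 \<Longrightarrow> (s = 1 \<and> t = 2) \<or> (s = 1 \<and> t = 3) \<or> (s = 1 \<and> t = 4) \<or> (s = 2 \<and> t = 3) \<or> (s = 2 \<and> t = 4) \<or> (s = 3 \<and> t = (4::nat))" by auto
  have s3: "\<And>s. 1 \<le> s \<and> s \<le> 4 \<Longrightarrow> s = 1 \<or> s = 2 \<or> s = 3 \<or> s = (4::nat)" by auto
  show "contains n p [2,3,1,4]" unfolding contains_def
  proof (intro exI[of _ i] conjI allI impI)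
    fix s t :: nat assume "1 \<le> s \<and> s < t \<and> t \<le> length [2,3,1,4::nat]"
    then have "(s = 1 \<and> t = 2) \<or> (s = 1 \<and> t = 3) \<or> (s = 1 \<and> t = 4) \<or> (s = 2 \<and> t = 3) \<or> (s = 2 \<and> t = 4) \<or> (s = 3 \<and> t = 4)" using st by simp
    then show "i s < i t" using h by (elim disjE) (simp_all add: i_def)
  next
    fix s :: nat assume "1 \<le> s \<and> s \<le> length [2,3,1,4::nat]"
    then have "s = 1 \<or> s = 2 \<or> s = 3 \<or> s = 4" using s3 by simp
    then show "i s \<in> {1..n}" using h by (elim disjE) (simp_all add: i_def)
  next
    fix s t :: nat assume "1 \<le> s \<and> s < t \<and> t \<le> length [2,3,1,4::nat]"
    then have "(s = 1 \<and> t = 2) \<or> (s = 1 \<and> t = 3) \<or> (s = 1 \<and> t = 4) \<or> (s = 2 \<and> t = 3) \<or> (s = 2 \<and> t = 4) \<or> (s = 3 \<and> t = 4)" using st by simp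
    then show "(p (i s) > p (i t) \<longleftrightarrow> [2,3,1,4::nat] ! (s - 1) > [2,3,1,4::nat] ! (t - 1))"
      using h by (elim disjE) (simp_all add: i_def)
  qed
qed

lemma contains_restrict:
  assumes "k \<le> n" "\<And>i. 1 \<le> i \<Longrightarrow> i \<le> k \<Longrightarrow> p i = p' i" "contains k p tau"
  shows "contains n p' tau"
proof -
  obtain i where h1: "\<And>s t::nat. 1 \<le> s \<Longrightarrow> s < t \<Longrightarrow> t \<le> length tau \<Longrightarrow> i s < i t"
    and h2: "\<And>s::nat. 1 \<le> s \<Longrightarrow> s \<le> length tau \<Longrightarrow> 1 \<le> i s \<and> i s \<le> k"
    and h3: "\<And>s t::nat. 1 \<le> s \<Longrightarrow> s < t \<Longrightarrow> t \<le> length tau \<Longrightarrow> (p (i s) > p (i t) \<longleftrightarrow> tau ! (s - 1) > tau ! (t - 1))"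
    using contains_E[OF assms(3)] by blast
  show ?thesis unfolding contains_def
  proof (intro exI[of _ i] conjI allI impI)
    fix s t :: nat assume "1 \<le> s \<and> s < t \<and> t \<le> length tau"
    then show "i s < i t" using h1 by blast
  next
    fix s :: nat assume "1 \<le> s \<and> s \<le> length tau"
    then show "i s \<in> {1..n}" using h2 assms(1) by fastforce
  next
    fix s t :: nat assume st: "1 \<le> s \<and> s < t \<and> t \<le> length tau"
    then have "p (i s) = p' (i s)" "p (i t) = p' (i t)" using h2 assms(2) by auto
    then show "(p' (i s) > p' (i t) \<longleftrightarrow> tau ! (s - 1) > tau ! (t - 1))"
      using h3 st by metis
  qed
qed

lemma pig:
  fixes p :: "nat \<Rightarrow> nat"
  assumes inj: "inj_on p {L..R}"
  and vals: "\<And>i. L \<le> i \<Longrightarrow> i \<le> R \<Longrightarrow> p i \<le> M"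
  and sur: "\<And>v. 1 \<le> v \<Longrightarrow> v \<le> M \<Longrightarrow> \<exists>i. L \<le> i \<and> i \<le> R \<and> p i = v"
  and q: "L \<le> q" "q \<le> R" "p q = M"
  and av: "\<And>a b c. L \<le> a \<Longrightarrow> a < b \<Longrightarrow> b < c \<Longrightarrow> c \<le> R \<Longrightarrow> \<not> (p c < p a \<and> p a < p b)"
  and i: "L \<le> i" "i < q"
  shows "p i \<le> q - L"
proof (rule ccontr)
  assume "\<not> p i \<le> q - L"
  hence pi: "p i > q - L" by simp
  have "p i \<noteq> M" using inj q i inj_onD[OF inj, of i q] by auto
  hence piM: "p i < M" using vals[of i] i q by auto
  have sub: "{1..q-L} \<subseteq> p ` ({L..<q} - {i})"
  proof
    fix v assume v: "v \<in> {1..q-L}"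
    then obtain x where x: "L \<le> x" "x \<le> R" "p x = v" using sur[of v] pi piM by auto
    have "x \<noteq> q" using x v q pi piM by auto
    moreover have "\<not> x > q" using av[of i q x] x v pi i q piM by auto
    moreover have "x \<noteq> i" using x v pi by auto
    ultimately show "v \<in> p ` ({L..<q} - {i})" using x by auto
  qed
  have "card {1..q-L} \<le> card (p ` ({L..<q} - {i}))" by (rule card_mono[OF _ sub]) auto
  also have "\<dots> \<le> card ({L..<q} - {i})" by (rule card_image_le) auto
  also have "\<dots> = q - L - 1" using i by simp
  finally show False using i by simp
qed

lemma dec_chain:
  fixes f :: "nat \<Rightarrow> nat"
  assumes dec: "\<And>i j. lo \<le> i \<Longrightarrow> i < j \<Longrightarrow> j \<le> hi \<Longrightarrow> f j < f i"
  shows "lo \<le> b \<Longrightarrow> b + k \<le> hi \<Longrightarrow> f (b + k) + k \<le> f b"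
proof (induction k)
  case 0 then show ?case by simp
next
  case (Suc k)
  then have "f (b + Suc k) < f (b + k)" using dec[of "b+k" "b + Suc k"] by simp
  with Suc show ?case by simp
qed

lemma dec_vals:
  fixes f :: "nat \<Rightarrow> nat"
  assumes dec: "\<And>i j. lo \<le> i \<Longrightarrow> i < j \<Longrightarrow> j \<le> hi \<Longrightarrow> f j < f i"
  and bnd: "\<And>i. lo \<le> i \<Longrightarrow> i \<le> hi \<Longrightarrow> A \<le> f i \<and> f i \<le> B"
  and len: "B + lo = A + hi"
  and i: "lo \<le> i" "i \<le> hi"
  shows "f i + i = B + lo"
proof -
  have 1: "f (lo + (i - lo)) + (i - lo) \<le> f lo" by (rule dec_chain[OF dec]) (use i in auto)
  have 2: "f (i + (hi - i)) + (hi - i) \<le> f i" by (rule dec_chain[OF dec]) (use i in auto)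
  have "f lo \<le> B" "A \<le> f hi" using bnd i by auto
  then show ?thesis using 1 2 i len by auto
qed

lemma inc_chain:
  fixes f :: "nat \<Rightarrow> nat"
  assumes inc: "\<And>i j. lo \<le> i \<Longrightarrow> i < j \<Longrightarrow> j \<le> hi \<Longrightarrow> f i < f j"
  shows "lo \<le> b \<Longrightarrow> b + k \<le> hi \<Longrightarrow> f b + k \<le> f (b + k)"
proof (induction k)
  case 0 then show ?case by simp
next
  case (Suc k)
  then have "f (b + k) < f (b + Suc k)" using inc[of "b+k" "b + Suc k"] by simp
  with Suc show ?case by simp
qed

lemma inc_vals:
  fixes f :: "nat \<Rightarrow> nat"
  assumes inc: "\<And>i j. lo \<le> i \<Longrightarrow> i < j \<Longrightarrow> j \<le> hi \<Longrightarrow> f i < f j"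
  and bnd: "\<And>i. lo \<le> i \<Longrightarrow> i \<le> hi \<Longrightarrow> A \<le> f i \<and> f i \<le> B"
  and len: "B + lo = A + hi"
  and i: "lo \<le> i" "i \<le> hi"
  shows "f i + lo = A + i"
proof -
  have 1: "f lo + (i - lo) \<le> f (lo + (i - lo))" by (rule inc_chain[OF inc]) (use i in auto)
  have 2: "f i + (hi - i) \<le> f (i + (hi - i))" by (rule inc_chain[OF inc]) (use i in auto)
  have "A \<le> f lo" "f hi \<le> B" using bnd i by auto
  then show ?thesis using 1 2 i len by auto
qed

lemma perm_facts:
  assumes "p permutes {1..n}"
  shows "inj_on p {1..n}" "\<And>i. 1 \<le> i \<Longrightarrow> i \<le> n \<Longrightarrow> 1 \<le> p i \<and> p i \<le> n"
    "\<And>i. \<not> (1 \<le> i \<and> i \<le> n) \<Longrightarrow> p i = i"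
    "\<And>v. 1 \<le> v \<Longrightarrow> v \<le> n \<Longrightarrow> \<exists>i. 1 \<le> i \<and> i \<le> n \<and> p i = v"
proof -
  show "inj_on p {1..n}" using assms permutes_inj_on by blast
  show "\<And>i. 1 \<le> i \<Longrightarrow> i \<le> n \<Longrightarrow> 1 \<le> p i \<and> p i \<le> n"
    using permutes_in_image[OF assms] by auto
  show "\<And>i. \<not> (1 \<le> i \<and> i \<le> n) \<Longrightarrow> p i = i"
    using permutes_not_in[OF assms] by auto
  show "\<And>v. 1 \<le> v \<Longrightarrow> v \<le> n \<Longrightarrow> \<exists>i. 1 \<le> i \<and> i \<le> n \<and> p i = v"
  proof -
    fix v assume "1 \<le> v" "v \<le> n"
    then have "v \<in> p ` {1..n}" using permutes_image[OF assms] by auto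
    then show "\<exists>i. 1 \<le> i \<and> i \<le> n \<and> p i = v" by auto
  qed
qed

definition V :: "nat \<Rightarrow> (nat \<Rightarrow> nat) set" where
  "V n = {p \<in> perms n. avoids n p [2,3,1] \<and> avoids n p [1,4,2,3] \<and> avoids n (p \<circ> p) [2,3,1]}"

definition Bp :: "nat \<Rightarrow> nat \<Rightarrow> nat \<Rightarrow> nat" where
  "Bp n s i = (if 1 \<le> i \<and> i \<le> n then (if i \<le> n - s then n + 1 - i else i - (n - s)) else i)"

definition blk :: "nat \<Rightarrow> nat \<Rightarrow> (nat \<Rightarrow> nat) \<Rightarrow> nat \<Rightarrow> nat" where
  "blk n k a i = (if k < i \<and> i \<le> n then n + k + 1 - i else a i)"

definition S :: "nat \<Rightarrow> nat set" where
  "S n = insert 0 {2..n div 2}"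

lemma Bcase:
  fixes p :: "nat \<Rightarrow> nat"
  assumes perm: "p permutes {1..n}" and n: "1 \<le> n" and p1: "p 1 = n"
  and a231: "\<And>a b c. 1 \<le> a \<Longrightarrow> a < b \<Longrightarrow> b < c \<Longrightarrow> c \<le> n \<Longrightarrow> \<not> (p c < p a \<and> p a < p b)"
  and a1423: "\<And>a b c d. 1 \<le> a \<Longrightarrow> a < b \<Longrightarrow> b < c \<Longrightarrow> c < d \<Longrightarrow> d \<le> n \<Longrightarrow> \<not> (p a < p c \<and> p c < p d \<and> p d < p b)"
  and q231: "\<And>a b c. 1 \<le> a \<Longrightarrow> a < b \<Longrightarrow> b < c \<Longrightarrow> c \<le> n \<Longrightarrow> \<not> (p (p c) < p (p a) \<and> p (p a) < p (p b))"
  shows "\<exists>s\<in>S n. p = Bp n s"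
proof -
  note pf = perm_facts[OF perm]
  have inj: "inj_on p {1..n}" by (rule pf(1))
  have injD: "\<And>i j. 1 \<le> i \<Longrightarrow> i \<le> n \<Longrightarrow> 1 \<le> j \<Longrightarrow> j \<le> n \<Longrightarrow> p i = p j \<Longrightarrow> i = j"
    using inj_onD[OF inj] by auto
  obtain d where d: "1 \<le> d" "d \<le> n" "\<And>i. 1 \<le> i \<Longrightarrow> i \<le> d \<Longrightarrow> p i = n + 1 - i"
    "d < n \<Longrightarrow> p (d+1) \<noteq> n - d"
  proof (cases "\<exists>i. 1 \<le> i \<and> i \<le> n \<and> p i \<noteq> n + 1 - i")
    case False
    then show ?thesis using that[of n] n by auto
  next
    case True
    define i0 where "i0 = (LEAST i. 1 \<le> i \<and> i \<le> n \<and> p i \<noteq> n + 1 - i)"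
    have i0: "1 \<le> i0 \<and> i0 \<le> n \<and> p i0 \<noteq> n + 1 - i0"
      unfolding i0_def using True by (rule LeastI_ex)
    have lt: "\<And>i. i < i0 \<Longrightarrow> \<not> (1 \<le> i \<and> i \<le> n \<and> p i \<noteq> n + 1 - i)"
      unfolding i0_def by (rule not_less_Least)
    have "i0 \<noteq> 1" using i0 p1 by auto
    then have "2 \<le> i0" using i0 by auto
    show ?thesis
    proof (rule that[of "i0 - 1"])
      show "1 \<le> i0 - 1" using \<open>2 \<le> i0\<close> by auto
      show "i0 - 1 \<le> n" using i0 by auto
      show "\<And>i. 1 \<le> i \<Longrightarrow> i \<le> i0 - 1 \<Longrightarrow> p i = n + 1 - i" using lt i0 by fastforce
      show "i0 - 1 < n \<Longrightarrow> p (i0 - 1 + 1) \<noteq> n - (i0 - 1)" using i0 \<open>2 \<le> i0\<close> by auto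
    qed
  qed
  define s where "s = n - d"
  show ?thesis
  proof (cases "s = 0")
    case True
    have "p = Bp n 0"
    proof
      fix i show "p i = Bp n 0 i"
        using d True pf(3)[of i] unfolding s_def Bp_def by auto
    qed
    then show ?thesis unfolding S_def by auto
  next
    case False
    have tail1: "\<And>i. d < i \<Longrightarrow> i \<le> n \<Longrightarrow> 1 \<le> p i \<and> p i \<le> s"
    proof -
      fix i assume i: "d < i" "i \<le> n"
      have r: "1 \<le> p i \<and> p i \<le> n" using pf(2)[of i] i d by auto
      show "1 \<le> p i \<and> p i \<le> s"
      proof (rule ccontr)
        assume "\<not> (1 \<le> p i \<and> p i \<le> s)"
        then have ps: "p i > s" using r by auto
        define j where "j = n + 1 - p i"
        have j: "1 \<le> j" "j \<le> d" using ps r unfolding j_def s_def by auto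
        have "p j = p i" using d(3)[OF j] r unfolding j_def by auto
        then have "j = i" using injD[of j i] j i d by auto
        then show False using j i by auto
      qed
    qed
    have tail2: "\<And>v. 1 \<le> v \<Longrightarrow> v \<le> s \<Longrightarrow> \<exists>i. d < i \<and> i \<le> n \<and> p i = v"
    proof -
      fix v assume v: "1 \<le> v" "v \<le> s"
      have "v \<le> n" using v unfolding s_def by auto
      then obtain i where i: "1 \<le> i" "i \<le> n" "p i = v" using pf(4)[of v] v by blast
      have "\<not> i \<le> d" using d(3)[of i] i v unfolding s_def by auto
      then show "\<exists>i. d < i \<and> i \<le> n \<and> p i = v" using i not_le by blast
    qed
    obtain q where q: "d < q" "q \<le> n" "p q = s" using tail2[of s] False by auto
    have dn: "d < n" using False unfolding s_def by auto
    have s2: "2 \<le> s"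
    proof (rule ccontr)
      assume "\<not> 2 \<le> s"
      then have "s = 1" using False by auto
      then have "p (d+1) = 1" using tail1[of "d+1"] dn by auto
      then show False using d(4)[OF dn] \<open>s = 1\<close> unfolding s_def by auto
    qed
    have qd: "d + 1 < q"
    proof -
      have "q \<noteq> d + 1" using q d(4)[OF dn] unfolding s_def by auto
      then show ?thesis using q by auto
    qed
    define g where "g = q - d - 1"
    have g1: "1 \<le> g" using qd unfolding g_def by auto
    have gam: "\<And>i. d < i \<Longrightarrow> i < q \<Longrightarrow> p i \<le> g"
    proof -
      fix i assume i: "d < i" "i < q"
      have h1: "inj_on p {d+1..n}" using inj d by (auto intro: inj_on_subset)
      have h2: "\<And>i. d + 1 \<le> i \<Longrightarrow> i \<le> n \<Longrightarrow> p i \<le> s" using tail1 by auto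
      have h3: "\<And>v. 1 \<le> v \<Longrightarrow> v \<le> s \<Longrightarrow> \<exists>i. d + 1 \<le> i \<and> i \<le> n \<and> p i = v" using tail2
          by (metis Suc_eq_plus1 Suc_le_eq)
      have h4: "d + 1 \<le> q" "q \<le> n" "p q = s" using q by auto
      have h5: "\<And>a b c. d + 1 \<le> a \<Longrightarrow> a < b \<Longrightarrow> b < c \<Longrightarrow> c \<le> n \<Longrightarrow> \<not> (p c < p a \<and> p a < p b)"
          using a231 d by auto
      have h6: "d + 1 \<le> i" "i < q" using i by auto
      have "p i \<le> q - (d+1)" by (rule pig[OF h1 h2 h3 h4 h5 h6])
      then show "p i \<le> g" unfolding g_def by simp
    qed
    have onto: "p ` {d+1..<q} = {1..g}"
    proof (rule card_subset_eq)
      show "finite {1..g}" by simp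
      show "p ` {d + 1..<q} \<subseteq> {1..g}" using gam tail1 q by fastforce
      have "inj_on p {d+1..<q}" using inj d q by (auto intro: inj_on_subset)
      then show "card (p ` {d + 1..<q}) = card {1..g}" by (simp add: card_image g_def)
    qed
    have del: "\<And>c. q < c \<Longrightarrow> c \<le> n \<Longrightarrow> g < p c \<and> p c < s"
    proof -
      fix c assume c: "q < c" "c \<le> n"
      have "p c \<le> s" "1 \<le> p c" using tail1[of c] c q by auto
      moreover have "p c \<noteq> s" using injD[of c q] c q d by auto
      moreover have "\<not> p c \<le> g"
      proof
        assume "p c \<le> g"
        then have "p c \<in> p ` {d+1..<q}" using onto \<open>1 \<le> p c\<close> by auto
        then obtain i where "i \<in> {d+1..<q}" "p i = p c" by auto
        then show False using injD[of i c] c d q by auto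
      qed
      ultimately show "g < p c \<and> p c < s" by auto
    qed
    obtain p1 where pp1: "d < p1" "p1 < q" "p p1 = 1"
    proof -
      obtain i where i: "d < i" "i \<le> n" "p i = 1" using tail2[of 1] s2 by auto
      have "i \<noteq> q" using i q s2 by auto
      moreover have "\<not> q < i" using del[of i] i g1 by auto
      ultimately show ?thesis using that[of i] i by auto
    qed
    have ppd: "\<And>i. 1 \<le> i \<Longrightarrow> i \<le> d \<Longrightarrow> p (p i) = p (n + 1 - i)" using d(3) by auto
    have ppp1: "p (p p1) = n" using pp1 p1 by simp
    show ?thesis
    proof (cases "q = n")
      case qn: True
      show ?thesis
      proof (cases "d < s")
        case True
        have "s < q" using qn d unfolding s_def by auto
        then have "p s \<le> g" using gam[of s] True by auto
        moreover have "p (p 1) = s" using p1 q qn by simp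
        moreover have "g < s" using qn dn unfolding g_def s_def by auto
        moreover have "1 < p1" "p1 < n" using pp1 d qn by auto
        ultimately have A: "p (p n) < p (p 1)" "p (p 1) < p (p p1)" using ppp1 qn q dn d unfolding s_def by auto
        show ?thesis using q231[of 1 p1 n] A \<open>1 < p1\<close> \<open>p1 < n\<close> by blast
      next
        case False
        have ppt: "\<And>x. d < x \<Longrightarrow> x \<le> n \<Longrightarrow> p (p x) = n + 1 - p x"
        proof -
          fix x assume x: "d < x" "x \<le> n"
          then have "1 \<le> p x" "p x \<le> d" using tail1[OF x] False by auto
          then show "p (p x) = n + 1 - p x" using d(3) by blast
        qed
        have inc: "\<And>a b. d + 1 \<le> a \<Longrightarrow> a < b \<Longrightarrow> b \<le> n - 1 \<Longrightarrow> p a < p b"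
        proof (rule ccontr)
          fix a b assume ab: "d + 1 \<le> a" "a < b" "b \<le> n - 1" "\<not> p a < p b"
          have "b \<le> n" using ab by auto
          then have "p a \<noteq> p b" using injD[of a b] ab d by auto
          then have "p b < p a" using ab by auto
          moreover have "p a \<le> g" using gam[of a] ab qn by auto
          moreover have "g < s" using qn dn unfolding g_def s_def by auto
          moreover have "1 \<le> p b" using tail1[of b] ab by auto
          moreover have "p (p n) = n + 1 - s" using ppt[of n] q qn dn by auto
          moreover have "b < n" "a \<le> n" "s \<le> n" using ab dn unfolding s_def by auto
          ultimately show False using q231[of a b n] ppt[of a] ppt[of b] ab d dn tail1[of a] tail1[of b]
            by auto
        qed
        have vals: "\<And>i. d + 1 \<le> i \<Longrightarrow> i \<le> n - 1 \<Longrightarrow> p i + (d + 1) = 1 + i"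
        proof -
          fix i assume i: "d + 1 \<le> i" "i \<le> n - 1"
          show "p i + (d + 1) = 1 + i"
          proof (rule inc_vals[where hi = "n - 1" and B = g])
            show "\<And>i j. d + 1 \<le> i \<Longrightarrow> i < j \<Longrightarrow> j \<le> n - 1 \<Longrightarrow> p i < p j" by (rule inc)
            show "\<And>i. d + 1 \<le> i \<Longrightarrow> i \<le> n - 1 \<Longrightarrow> 1 \<le> p i \<and> p i \<le> g"
              using gam tail1 qn by fastforce
            show "g + (d + 1) = 1 + (n - 1)" using qn dn unfolding g_def by auto
          qed (use i in auto)
        qed
        have "p = Bp n s"
        proof
          fix i show "p i = Bp n s i"
          proof (cases "1 \<le> i \<and> i \<le> n")
            case True
            show ?thesis
            proof (cases "i \<le> d")
              case True then show ?thesis using d(3)[of i] \<open>1 \<le> i \<and> i \<le> n\<close> unfolding Bp_def s_def by auto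
            next
              case False
              show ?thesis
              proof (cases "i = n")
                case True then show ?thesis using q qn \<open>1 \<le> i \<and> i \<le> n\<close> False d unfolding Bp_def s_def by auto
              next
                case False2: False
                then have "i \<le> n - 1" "d + 1 \<le> i" using False \<open>1 \<le> i \<and> i \<le> n\<close> by auto
                then have "p i + (d + 1) = 1 + i" by (rule vals[rotated])
                then show ?thesis using False \<open>1 \<le> i \<and> i \<le> n\<close> d unfolding Bp_def s_def by auto
              qed
            qed
          next
            case False then show ?thesis using pf(3)[of i] unfolding Bp_def by auto
          qed
        qed
        moreover have "s \<in> S n" using s2 False unfolding S_def s_def by auto
        ultimately show ?thesis by auto
      qed
    next
      case qn: False
      have decr: "\<And>b c. q + 1 \<le> b \<Longrightarrow> b < c \<Longrightarrow> c \<le> n \<Longrightarrow> p c < p b"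
      proof (rule ccontr)
        fix b c assume bc: "q + 1 \<le> b" "b < c" "c \<le> n" "\<not> p c < p b"
        have "p b \<noteq> p c" using injD[of b c] bc q d by auto
        then have "p b < p c" using bc by auto
        moreover have "1 < p b" "p c < s" using del[of b] del[of c] bc g1 by auto
        ultimately show False using a1423[of p1 q b c] pp1 q bc d by auto
      qed
      have dv: "\<And>i. q + 1 \<le> i \<Longrightarrow> i \<le> n \<Longrightarrow> p i + i = s + q"
      proof -
        fix i assume i: "q + 1 \<le> i" "i \<le> n"
        have "p i + i = (s - 1) + (q + 1)"
        proof (rule dec_vals[where hi = n and A = "g + 1"])
          show "\<And>i j. q + 1 \<le> i \<Longrightarrow> i < j \<Longrightarrow> j \<le> n \<Longrightarrow> p j < p i" by (rule decr)
          show "\<And>i. q + 1 \<le> i \<Longrightarrow> i \<le> n \<Longrightarrow> g + 1 \<le> p i \<and> p i \<le> s - 1"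
          proof -
            fix i assume "q + 1 \<le> i" "i \<le> n"
            then have "g < p i \<and> p i < s" using del by auto
            then show "g + 1 \<le> p i \<and> p i \<le> s - 1" by auto
          qed
          show "s - 1 + (q + 1) = g + 1 + n" using qd q s2 unfolding g_def s_def by auto
        qed (use i in auto)
        then show "p i + i = s + q" using s2 by auto
      qed
      have pn: "p n = g + 1" using dv[of n] q qn qd d unfolding g_def s_def by auto
      have pp1n: "p (p 1) = g + 1" using p1 pn by simp
      have gs: "g + 1 < s" using del[of n] q qn pn by auto
      define e where "e = n - q"
      consider "d \<le> g" | "g < d \<and> d \<le> e" | "d = e + 1" | "e + 2 \<le> d" by linarith
      then show ?thesis
      proof cases
        case 1
        have "d < g + 1" "g + 1 < q" using 1 d qd unfolding g_def by auto
        then have "p (p n) \<le> g" using gam[of "g+1"] pn by auto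
        moreover have "1 < p1" "p1 < n" using pp1 d q qn by auto
        ultimately show ?thesis using q231[of 1 p1 n] pp1n ppp1 gs unfolding s_def by auto
      next
        case 2
        define c where "c = s + q - (d + 1)"
        have c: "q + 1 \<le> c" "c \<le> n" using 2 qd q unfolding c_def e_def g_def s_def by auto
        have "p c = d + 1" using dv[OF c] unfolding c_def using c unfolding c_def by auto
        then have "p (p c) \<le> g" using gam[of "d+1"] qd by auto
        moreover have "1 < p1" "p1 < c" using pp1 d c by auto
        ultimately show ?thesis using q231[of 1 p1 c] pp1n ppp1 gs c unfolding s_def by auto
      next
        case 3
        have sq: "s = q - 1" using 3 q unfolding s_def e_def by auto
        then have "p (p q) \<le> g" using gam[of s] q qd by auto
        moreover have "1 < p1" "p1 < q" using pp1 d by auto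
        ultimately show ?thesis using q231[of 1 p1 q] pp1n ppp1 gs q unfolding s_def by auto
      next
        case 4
        have b: "p (p (n + 1 - q)) = s" using ppd[of "n + 1 - q"] 4 q qn unfolding e_def by auto
        have c: "p (p (n + 2 - q)) \<le> g" using ppd[of "n + 2 - q"] 4 q qn gam[of "q - 1"] qd
          unfolding e_def by auto
        have pos: "1 < n + 1 - q" "n + 1 - q < n + 2 - q" "n + 2 - q \<le> n" using q qn d by auto
        have "p (p (n + 2 - q)) < p (p 1)" "p (p 1) < p (p (n + 1 - q))" using b c pp1n gs by auto
        then show ?thesis using q231[of 1 "n + 1 - q" "n + 2 - q"] pos by blast
      qed
    qed
  qed
qed

lemma mk_perm:
  fixes f :: "nat \<Rightarrow> nat"
  assumes "inj_on f {1..n}" "\<And>i. 1 \<le> i \<Longrightarrow> i \<le> n \<Longrightarrow> 1 \<le> f i \<and> f i \<le> n"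
    "\<And>i. \<not> (1 \<le> i \<and> i \<le> n) \<Longrightarrow> f i = i"
  shows "f permutes {1..n}"
proof (rule bij_imp_permutes)
  have "f ` {1..n} \<subseteq> {1..n}"
  proof
    fix y assume "y \<in> f ` {1..n}"
    then obtain x where "x \<in> {1..n}" "y = f x" by blast
    then show "y \<in> {1..n}" using assms(2)[of x] by simp
  qed
  moreover have fin: "finite {1..n::nat}" by simp
  ultimately have "f ` {1..n} = {1..n}" using endo_inj_surj[OF fin _ assms(1)] by simp
  then show "bij_betw f {1..n} {1..n}" using assms(1) unfolding bij_betw_def by auto
  show "\<And>x. x \<notin> {1..n} \<Longrightarrow> f x = x" using assms(3) by auto
qed

lemma V_D:
  fixes p :: "nat \<Rightarrow> nat"
  assumes "p \<in> V n"
  shows "p permutes {1..n}"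
    "\<And>a b c. 1 \<le> a \<Longrightarrow> a < b \<Longrightarrow> b < c \<Longrightarrow> c \<le> n \<Longrightarrow> \<not> (p c < p a \<and> p a < p b)"
    "\<And>a b c d. 1 \<le> a \<Longrightarrow> a < b \<Longrightarrow> b < c \<Longrightarrow> c < d \<Longrightarrow> d \<le> n \<Longrightarrow> \<not> (p a < p c \<and> p c < p d \<and> p d < p b)"
    "\<And>a b c. 1 \<le> a \<Longrightarrow> a < b \<Longrightarrow> b < c \<Longrightarrow> c \<le> n \<Longrightarrow> \<not> (p (p c) < p (p a) \<and> p (p a) < p (p b))"
proof -
  show perm: "p permutes {1..n}" using assms unfolding V_def perms_def by auto
  have inj: "inj_on p {1..n}" using perm permutes_inj_on by blast
  have inj2: "inj_on (p \<circ> p) {1..n}" using permutes_compose[OF perm perm] permutes_inj_on by blast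
  have av: "\<not> contains n p [2,3,1]" "\<not> contains n p [1,4,2,3]" "\<not> contains n (p \<circ> p) [2,3,1]"
    using assms unfolding V_def avoids_def by auto
  show "\<And>a b c. 1 \<le> a \<Longrightarrow> a < b \<Longrightarrow> b < c \<Longrightarrow> c \<le> n \<Longrightarrow> \<not> (p c < p a \<and> p a < p b)"
    using av(1) unfolding c231[OF inj] by blast
  show "\<And>a b c d. 1 \<le> a \<Longrightarrow> a < b \<Longrightarrow> b < c \<Longrightarrow> c < d \<Longrightarrow> d \<le> n \<Longrightarrow> \<not> (p a < p c \<and> p c < p d \<and> p d < p b)"
    using av(2) unfolding c1423[OF inj] by blast
  show "\<And>a b c. 1 \<le> a \<Longrightarrow> a < b \<Longrightarrow> b < c \<Longrightarrow> c \<le> n \<Longrightarrow> \<not> (p (p c) < p (p a) \<and> p (p a) < p (p b))"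
    using av(3) unfolding c231[OF inj2] by auto
qed

lemma V_I:
  fixes p :: "nat \<Rightarrow> nat"
  assumes perm: "p permutes {1..n}"
    and a1: "\<And>a b c. 1 \<le> a \<Longrightarrow> a < b \<Longrightarrow> b < c \<Longrightarrow> c \<le> n \<Longrightarrow> \<not> (p c < p a \<and> p a < p b)"
    and a2: "\<And>a b c d. 1 \<le> a \<Longrightarrow> a < b \<Longrightarrow> b < c \<Longrightarrow> c < d \<Longrightarrow> d \<le> n \<Longrightarrow> \<not> (p a < p c \<and> p c < p d \<and> p d < p b)"
    and a3: "\<And>a b c. 1 \<le> a \<Longrightarrow> a < b \<Longrightarrow> b < c \<Longrightarrow> c \<le> n \<Longrightarrow> \<not> (p (p c) < p (p a) \<and> p (p a) < p (p b))"
  shows "p \<in> V n"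
proof -
  have inj: "inj_on p {1..n}" using perm permutes_inj_on by blast
  have inj2: "inj_on (p \<circ> p) {1..n}" using permutes_compose[OF perm perm] permutes_inj_on by blast
  have "\<not> contains n p [2,3,1]" unfolding c231[OF inj] using a1 by blast
  moreover have "\<not> contains n p [1,4,2,3]" unfolding c1423[OF inj] using a2 by blast
  moreover have "\<not> contains n (p \<circ> p) [2,3,1]" unfolding c231[OF inj2] using a3 by auto
  ultimately show ?thesis using perm unfolding V_def avoids_def perms_def by auto
qed

lemma V_sub:
  fixes p :: "nat \<Rightarrow> nat"
  assumes pV: "p \<in> V n" and n: "1 \<le> n"
  shows "p \<in> Bp n ` S n \<union> (\<Union>k\<in>{1..<n}. blk n k ` V k)"
proof -
  note D = V_D[OF pV]
  note pf = perm_facts[OF D(1)]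
  have injD: "\<And>i j. 1 \<le> i \<Longrightarrow> i \<le> n \<Longrightarrow> 1 \<le> j \<Longrightarrow> j \<le> n \<Longrightarrow> p i = p j \<Longrightarrow> i = j"
    using inj_onD[OF pf(1)] by auto
  obtain q where q: "1 \<le> q" "q \<le> n" "p q = n" using pf(4)[of n] n by auto
  show ?thesis
  proof (cases "q = 1")
    case True
    then obtain s where "s \<in> S n" "p = Bp n s" using Bcase[OF D(1) n _ D(2) D(3) D(4)] q by auto
    then show ?thesis by auto
  next
    case False
    define k where "k = q - 1"
    have k: "1 \<le> k" "k < n" "q = k + 1" using False q unfolding k_def by auto
    have low: "\<And>i. 1 \<le> i \<Longrightarrow> i < q \<Longrightarrow> p i \<le> k"
    proof -
      fix i assume i: "1 \<le> i" "i < q"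
      have h2: "\<And>i. 1 \<le> i \<Longrightarrow> i \<le> n \<Longrightarrow> p i \<le> n" using pf(2) by auto
      have "p i \<le> q - 1" by (rule pig[OF pf(1) h2 pf(4) q D(2) i])
      then show "p i \<le> k" unfolding k_def .
    qed
    have onto: "p ` {1..<q} = {1..k}"
    proof (rule card_subset_eq)
      show "finite {1..k}" by simp
      show "p ` {1..<q} \<subseteq> {1..k}" using low pf(2) q by fastforce
      have "inj_on p {1..<q}" using pf(1) q by (auto intro: inj_on_subset)
      then show "card (p ` {1..<q}) = card {1..k}" by (simp add: card_image k_def)
    qed
    have high: "\<And>i. q < i \<Longrightarrow> i \<le> n \<Longrightarrow> q \<le> p i \<and> p i \<le> n - 1"
    proof -
      fix i assume i: "q < i" "i \<le> n"
      have r: "1 \<le> p i" "p i \<le> n" using pf(2)[of i] i q by auto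
      have "p i \<noteq> n" using injD[of i q] i q by auto
      moreover have "\<not> p i \<le> k"
      proof
        assume "p i \<le> k"
        then have "p i \<in> p ` {1..<q}" using onto r by auto
        then obtain j where "j \<in> {1..<q}" "p j = p i" by auto
        then show False using injD[of j i] i q by auto
      qed
      ultimately show "q \<le> p i \<and> p i \<le> n - 1" using r k by auto
    qed
    have decr: "\<And>b c. q + 1 \<le> b \<Longrightarrow> b < c \<Longrightarrow> c \<le> n \<Longrightarrow> p c < p b"
    proof (rule ccontr)
      fix b c assume bc: "q + 1 \<le> b" "b < c" "c \<le> n" "\<not> p c < p b"
      have "p b \<noteq> p c" using injD[of b c] bc q by auto
      then have "p b < p c" using bc by auto
      moreover have "p 1 < p b" using low[of 1] high[of b] bc k by auto
      moreover have "p c < p q" using high[of c] bc q by auto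
      ultimately show False using D(3)[of 1 q b c] bc k by auto
    qed
    have dv: "\<And>i. q \<le> i \<Longrightarrow> i \<le> n \<Longrightarrow> p i + i = n + q"
    proof -
      fix i assume i: "q \<le> i" "i \<le> n"
      show "p i + i = n + q"
      proof (cases "i = q")
        case True then show ?thesis using q by auto
      next
        case False
        have "p i + i = (n - 1) + (q + 1)"
        proof (rule dec_vals[where hi = n and A = q])
          show "\<And>i j. q + 1 \<le> i \<Longrightarrow> i < j \<Longrightarrow> j \<le> n \<Longrightarrow> p j < p i" by (rule decr)
          show "\<And>i. q + 1 \<le> i \<Longrightarrow> i \<le> n \<Longrightarrow> q \<le> p i \<and> p i \<le> n - 1"
            using high by auto
          show "n - 1 + (q + 1) = q + n" using k by auto
        qed (use i False in auto)
        then show ?thesis using k by auto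
      qed
    qed
    define a where "a = (\<lambda>i. if 1 \<le> i \<and> i \<le> k then p i else i)"
    have aperm: "a permutes {1..k}"
    proof (rule mk_perm)
      have "inj_on p {1..k}" using pf(1) k by (auto intro: inj_on_subset)
      then show "inj_on a {1..k}" unfolding a_def by (rule inj_on_cong[THEN iffD1, rotated]) auto
      show "\<And>i. 1 \<le> i \<Longrightarrow> i \<le> k \<Longrightarrow> 1 \<le> a i \<and> a i \<le> k" unfolding a_def using low pf(2) k by fastforce
      show "\<And>i. \<not> (1 \<le> i \<and> i \<le> k) \<Longrightarrow> a i = i" unfolding a_def by auto
    qed
    have pa: "p = blk n k a"
    proof
      fix i show "p i = blk n k a i"
      proof (cases "k < i \<and> i \<le> n")
        case True then show ?thesis using dv[of i] k unfolding blk_def by auto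
      next
        case False then show ?thesis using pf(3)[of i] k unfolding blk_def a_def by auto
      qed
    qed
    have aa: "\<And>i. 1 \<le> i \<Longrightarrow> i \<le> k \<Longrightarrow> a i = p i" unfolding a_def by auto
    have aa2: "\<And>i. 1 \<le> i \<Longrightarrow> i \<le> k \<Longrightarrow> (a \<circ> a) i = (p \<circ> p) i"
    proof -
      fix i assume i: "1 \<le> i" "i \<le> k"
      then have "1 \<le> p i" "p i \<le> k" using low[of i] pf(2)[of i] k by auto
      then show "(a \<circ> a) i = (p \<circ> p) i" using i unfolding a_def by auto
    qed
    have "a \<in> V k"
    proof -
      have "\<not> contains k a [2,3,1]"
        using contains_restrict[of k n a p "[2,3,1]"] aa k D(1) pV unfolding V_def avoids_def by auto
      moreover have "\<not> contains k a [1,4,2,3]"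
        using contains_restrict[of k n a p "[1,4,2,3]"] aa k pV unfolding V_def avoids_def by auto
      moreover have "\<not> contains k (a \<circ> a) [2,3,1]"
        using contains_restrict[of k n "a \<circ> a" "p \<circ> p" "[2,3,1]"] aa2 k pV unfolding V_def avoids_def by auto
      ultimately show ?thesis using aperm unfolding V_def avoids_def perms_def by auto
    qed
    then show ?thesis using pa k by auto
  qed
qed

lemma Bv: "1 \<le> i \<Longrightarrow> i \<le> n \<Longrightarrow> Bp n s i = (if i \<le> n - s then n + 1 - i else i - (n - s))"
  unfolding Bp_def by simp

lemma S_D: "s \<in> S n \<Longrightarrow> s \<le> n - s \<and> s \<noteq> 1"
proof -
  assume "s \<in> S n"
  then have "s = 0 \<or> (2 \<le> s \<and> s \<le> n div 2)" unfolding S_def by auto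
  then show ?thesis by presburger
qed

lemma BB: assumes "s \<le> n - s" "1 \<le> i" "i \<le> n"
  shows "Bp n s (Bp n s i) = (if i \<le> s then s + 1 - i else if i \<le> n - s then i else 2 * n - s + 1 - i)"
proof (cases "i \<le> n - s")
  case True
  define j where "j = n + 1 - i"
  have bi: "Bp n s i = j" using Bv[of i n s] True assms unfolding j_def by simp
  have j: "1 \<le> j" "j \<le> n" using assms unfolding j_def by auto
  show ?thesis
  proof (cases "i \<le> s")
    case True2: True
    have "\<not> j \<le> n - s" using True2 assms unfolding j_def by linarith
    then have "Bp n s j = j - (n - s)" using Bv[OF j, of s] by simp
    also have "\<dots> = s + 1 - i" using True2 assms unfolding j_def by linarith
    finally show ?thesis using bi True2 by simp
  next
    case False2: False
    have "j \<le> n - s" using False2 assms unfolding j_def by linarith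
    then have "Bp n s j = n + 1 - j" using Bv[OF j, of s] by simp
    also have "\<dots> = i" using assms unfolding j_def by linarith
    finally show ?thesis using bi False2 True by simp
  qed
next
  case False
  define j where "j = i - (n - s)"
  have bi: "Bp n s i = j" using Bv[of i n s] False assms unfolding j_def by simp
  have j: "1 \<le> j" "j \<le> n" "j \<le> n - s" using assms False unfolding j_def by linarith+
  have "Bp n s j = n + 1 - j" using Bv[OF j(1,2), of s] j(3) by simp
  also have "\<dots> = 2 * n - s + 1 - i" using assms False unfolding j_def by linarith
  finally show ?thesis using bi False assms by auto
qed

lemma Bp_V:
  assumes n: "1 \<le> n" and s: "s \<in> S n"
  shows "Bp n s \<in> V n"
proof -
  have sd: "s \<le> n - s" using S_D[OF s] by auto
  define d where "d = n - s"
  define f where "f = Bp n s"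
  have dn: "d \<le> n" "s \<le> d" "s + d = n" using sd unfolding d_def by auto
  have B1: "\<And>i. 1 \<le> i \<Longrightarrow> i \<le> d \<Longrightarrow> f i = n + 1 - i \<and> s < f i \<and> f i \<le> n"
  proof -
    fix i assume i: "1 \<le> i" "i \<le> d"
    then have "f i = n + 1 - i" unfolding f_def using Bv[of i n s] dn unfolding d_def by simp
    then show "f i = n + 1 - i \<and> s < f i \<and> f i \<le> n" using i dn by linarith
  qed
  have B2: "\<And>i. d < i \<Longrightarrow> i \<le> n \<Longrightarrow> f i + d = i \<and> 1 \<le> f i \<and> f i \<le> s"
  proof -
    fix i assume i: "d < i" "i \<le> n"
    then have "f i = i - d" unfolding f_def using Bv[of i n s] dn unfolding d_def by simp
    then show "f i + d = i \<and> 1 \<le> f i \<and> f i \<le> s" using i dn by linarith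
  qed
  have perm: "f permutes {1..n}"
  proof (rule mk_perm)
    show "inj_on f {1..n}"
    proof (rule inj_onI)
      fix x y assume xy: "x \<in> {1..n}" "y \<in> {1..n}" "f x = f y"
      consider "x \<le> d" "y \<le> d" | "x \<le> d" "d < y" | "d < x" "y \<le> d" | "d < x" "d < y" by linarith
      then show "x = y"
      proof cases
        case 1
        have "1 \<le> x" "1 \<le> y" using xy by auto
        then have "f x = n + 1 - x" "f y = n + 1 - y" using B1[of x] B1[of y] 1 by auto
        then show ?thesis using xy(3) 1 dn by linarith
      next
        case 2
        have "1 \<le> x" "y \<le> n" using xy by auto
        then have "s < f x" "f y \<le> s" using B1[of x] B2[of y] 2 by auto
        then show ?thesis using xy(3) by linarith
      next
        case 3
        have "1 \<le> y" "x \<le> n" using xy by auto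
        then have "s < f y" "f x \<le> s" using B1[of y] B2[of x] 3 by auto
        then show ?thesis using xy(3) by linarith
      next
        case 4
        have "x \<le> n" "y \<le> n" using xy by auto
        then have "f x + d = x" "f y + d = y" using B2[of x] B2[of y] 4 by auto
        then show ?thesis using xy(3) by linarith
      qed
    qed
    show "\<And>i. 1 \<le> i \<Longrightarrow> i \<le> n \<Longrightarrow> 1 \<le> f i \<and> f i \<le> n"
    proof -
      fix i assume "1 \<le> i" "i \<le> n"
      then show "1 \<le> f i \<and> f i \<le> n"
      proof (cases "i \<le> d")
        case True
        then have "s < f i \<and> f i \<le> n" using B1 \<open>1 \<le> i\<close> by blast
        then show ?thesis by linarith
      next
        case False
        then have "1 \<le> f i \<and> f i \<le> s" using B2 \<open>i \<le> n\<close> by (meson not_le)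
        then show ?thesis using dn by linarith
      qed
    qed
    show "\<And>i. \<not> (1 \<le> i \<and> i \<le> n) \<Longrightarrow> f i = i"
    proof -
      fix i assume h: "\<not> (1 \<le> i \<and> i \<le> n)"
      show "f i = i" unfolding f_def Bp_def by (rule if_not_P[OF h])
    qed
  qed
  have F1: "\<And>i. 1 \<le> i \<Longrightarrow> i \<le> s \<Longrightarrow> f (f i) + i = s + 1"
  proof -
    fix i assume i: "1 \<le> i" "i \<le> s"
    then have "f (f i) = s + 1 - i" unfolding f_def using BB[OF sd, of i] dn by simp
    then show "f (f i) + i = s + 1" using i by linarith
  qed
  have F2: "\<And>i. s < i \<Longrightarrow> i \<le> d \<Longrightarrow> f (f i) = i"
  proof -
    fix i assume i: "s < i" "i \<le> d"
    then show "f (f i) = i" unfolding f_def using BB[OF sd, of i] dn unfolding d_def by simp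
  qed
  have F3: "\<And>i. d < i \<Longrightarrow> i \<le> n \<Longrightarrow> f (f i) + i = 2 * n - s + 1"
  proof -
    fix i assume i: "d < i" "i \<le> n"
    then have "f (f i) = 2 * n - s + 1 - i" unfolding f_def using BB[OF sd, of i] dn unfolding d_def by simp
    then show "f (f i) + i = 2 * n - s + 1" using i dn by linarith
  qed
  have "f \<in> V n"
  proof (rule V_I[OF perm])
    fix a b c assume h: "1 \<le> a" "a < b" "b < c" "c \<le> n"
    show "\<not> (f c < f a \<and> f a < f b)"
    proof (cases "b \<le> d")
      case True then show ?thesis using B1[of a] B1[of b] h by auto
    next
      case False
      show ?thesis
      proof (cases "a \<le> d")
        case True then show ?thesis using B1[of a] B2[of b] h False by auto
      next
        case F2: False then show ?thesis using B2[of a] B2[of c] h False by auto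
      qed
    qed
  next
    fix a b c e assume h: "1 \<le> a" "a < b" "b < c" "c < e" "e \<le> n"
    show "\<not> (f a < f c \<and> f c < f e \<and> f e < f b)"
    proof (cases "b \<le> d")
      case True then show ?thesis using B1[of a] B1[of b] h by auto
    next
      case False
      show ?thesis
      proof (cases "a \<le> d")
        case True then show ?thesis using B1[of a] B2[of b] h False by auto
      next
        case F2: False then show ?thesis using B2[of b] B2[of c] h False by auto
      qed
    qed
  next
    fix a b c assume h: "1 \<le> a" "a < b" "b < c" "c \<le> n"
    show "\<not> (f (f c) < f (f a) \<and> f (f a) < f (f b))"
    proof (cases "c \<le> s")
      case True then show ?thesis using F1[of a] F1[of b] h by auto
    next
      case cs: False
      show ?thesis
      proof (cases "c \<le> d")
        case True
        show ?thesis
        proof (cases "a \<le> s")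
          case True then show ?thesis using F1[of a] F2[of c] h cs \<open>c \<le> d\<close> by auto
        next
          case False then show ?thesis using F2[of a] F2[of c] h cs \<open>c \<le> d\<close> by auto
        qed
      next
        case cd: False
        have fc: "d < f (f c)" using F3[of c] h cd dn by auto
        show ?thesis
        proof (cases "a \<le> d")
          case True
          have "f (f a) \<le> d"
          proof (cases "a \<le> s")
            case True then show ?thesis using F1[of a] h dn by auto
          next
            case False then show ?thesis using F2[of a] h \<open>a \<le> d\<close> by auto
          qed
          then show ?thesis using fc by auto
        next
          case False then show ?thesis using F3[of a] F3[of b] h by auto
        qed
      qed
    qed
  qed
  then show ?thesis unfolding f_def .
qed

lemma blk_V:
  fixes a :: "nat \<Rightarrow> nat"
  assumes k: "1 \<le> k" "k < n" and aV: "a \<in> V k"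
  shows "blk n k a \<in> V n"
proof -
  note D = V_D[OF aV]
  note af = perm_facts[OF D(1)]
  define p where "p = blk n k a"
  have p1: "\<And>i. 1 \<le> i \<Longrightarrow> i \<le> k \<Longrightarrow> p i = a i \<and> 1 \<le> a i \<and> a i \<le> k"
    unfolding p_def blk_def using af(2) by auto
  have p2: "\<And>i. k < i \<Longrightarrow> i \<le> n \<Longrightarrow> p i = n + k + 1 - i"
    unfolding p_def blk_def by auto
  have p3: "\<And>i. \<not> (1 \<le> i \<and> i \<le> n) \<Longrightarrow> p i = i"
    unfolding p_def blk_def using af(3) k by auto
  have perm: "p permutes {1..n}"
  proof (rule mk_perm)
    show "inj_on p {1..n}"
    proof (rule inj_onI)
      fix x y assume xy: "x \<in> {1..n}" "y \<in> {1..n}" "p x = p y"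
      consider "x \<le> k" "y \<le> k" | "x \<le> k" "k < y" | "k < x" "y \<le> k" | "k < x" "k < y" by linarith
      then show "x = y"
      proof cases
        case 1 then show ?thesis using xy p1[of x] p1[of y] inj_onD[OF af(1), of x y] by auto
      next
        case 2 then show ?thesis using xy p1[of x] p2[of y] by auto
      next
        case 3 then show ?thesis using xy p2[of x] p1[of y] by auto
      next
        case 4 then show ?thesis using xy p2[of x] p2[of y] by auto
      qed
    qed
    show "\<And>i. 1 \<le> i \<Longrightarrow> i \<le> n \<Longrightarrow> 1 \<le> p i \<and> p i \<le> n"
    proof -
      fix i assume "1 \<le> i" "i \<le> n"
      then show "1 \<le> p i \<and> p i \<le> n" using p1[of i] p2[of i] k by (cases "i \<le> k") auto
    qed
    show "\<And>i. \<not> (1 \<le> i \<and> i \<le> n) \<Longrightarrow> p i = i" by (rule p3)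
  qed
  have pp1: "\<And>i. 1 \<le> i \<Longrightarrow> i \<le> k \<Longrightarrow> p (p i) = a (a i)" using p1 by auto
  have pp2: "\<And>i. k < i \<Longrightarrow> i \<le> n \<Longrightarrow> p (p i) = i"
  proof -
    fix i assume i: "k < i" "i \<le> n"
    then have "k < n + k + 1 - i" "n + k + 1 - i \<le> n" by auto
    then show "p (p i) = i" using p2[OF i] p2[of "n + k + 1 - i"] i by auto
  qed
  have "p \<in> V n"
  proof (rule V_I[OF perm])
    fix x y z assume h: "1 \<le> x" "x < y" "y < z" "z \<le> n"
    show "\<not> (p z < p x \<and> p x < p y)"
    proof (cases "z \<le> k")
      case True then show ?thesis using D(2)[of x y z] h p1[of x] p1[of y] p1[of z] by auto
    next
      case False
      show ?thesis
      proof (cases "x \<le> k")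
        case True then show ?thesis using h False p1[of x] p2[of z] by auto
      next
        case F2: False then show ?thesis using h False p2[of x] p2[of y] p2[of z] by auto
      qed
    qed
  next
    fix x y z w assume h: "1 \<le> x" "x < y" "y < z" "z < w" "w \<le> n"
    show "\<not> (p x < p z \<and> p z < p w \<and> p w < p y)"
    proof (cases "w \<le> k")
      case True then show ?thesis using D(3)[of x y z w] h p1[of x] p1[of y] p1[of z] p1[of w] by auto
    next
      case False
      show ?thesis
      proof (cases "y \<le> k")
        case True then show ?thesis using h False p1[of y] p2[of w] by auto
      next
        case F2: False then show ?thesis using h False p2[of z] p2[of w] by auto
      qed
    qed
  next
    fix x y z assume h: "1 \<le> x" "x < y" "y < z" "z \<le> n"
    show "\<not> (p (p z) < p (p x) \<and> p (p x) < p (p y))"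
    proof (cases "z \<le> k")
      case True then show ?thesis using D(4)[of x y z] h pp1[of x] pp1[of y] pp1[of z] by auto
    next
      case False
      show ?thesis
      proof (cases "x \<le> k")
        case True
        have "a (a x) \<le> k" using p1[of x] p1[of "a x"] h True by auto
        then show ?thesis using h False True pp1[of x] pp2[of z] by auto
      next
        case F2: False then show ?thesis using h False pp2[of x] pp2[of z] by auto
      qed
    qed
  qed
  then show ?thesis unfolding p_def .
qed

lemma V_eq:
  assumes n: "1 \<le> n"
  shows "V n = Bp n ` S n \<union> (\<Union>k\<in>{1..<n}. blk n k ` V k)"
proof
  show "V n \<subseteq> Bp n ` S n \<union> (\<Union>k\<in>{1..<n}. blk n k ` V k)"
    using V_sub n by blast
  show "Bp n ` S n \<union> (\<Union>k\<in>{1..<n}. blk n k ` V k) \<subseteq> V n"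
  proof
    fix p assume "p \<in> Bp n ` S n \<union> (\<Union>k\<in>{1..<n}. blk n k ` V k)"
    then consider (a) s where "s \<in> S n" "p = Bp n s" | (b) k a where "k \<in> {1..<n}" "a \<in> V k" "p = blk n k a"
      by blast
    then show "p \<in> V n"
    proof cases
      case a then show ?thesis using Bp_V n by blast
    next
      case b then show ?thesis using blk_V by auto
    qed
  qed
qed

lemma finite_V: "finite (V n)"
proof (rule finite_subset)
  show "V n \<subseteq> {p. p permutes {1..n}}" unfolding V_def perms_def by auto
  show "finite {p. p permutes {1..n::nat}}" by (rule finite_permutations) simp
qed

lemma card_S: assumes "1 \<le> n" shows "card (S n) = (if n = 1 then 1 else n div 2)"
proof -
  have "0 \<notin> {2..n div 2}" by auto
  then have "card (S n) = Suc (card {2..n div 2})" unfolding S_def by simp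
  also have "\<dots> = Suc (Suc (n div 2) - 2)" by simp
  finally have c: "card (S n) = Suc (Suc (n div 2) - 2)" .
  show ?thesis
  proof (cases "n = 1")
    case True then show ?thesis using c by simp
  next
    case False
    then have "1 \<le> n div 2" using assms by presburger
    then show ?thesis using c False by simp
  qed
qed

lemma Bp_1: assumes "s \<in> S n" "1 \<le> n" shows "Bp n s 1 = n"
proof -
  have "s \<le> n - s" "s \<noteq> 1" using S_D[OF assms(1)] by auto
  then have "1 \<le> n - s" using assms(2) by (cases "s = 0") auto
  then show ?thesis using Bv[of 1 n s] assms(2) by simp
qed

lemma Bp_n: assumes "s \<in> S n" "1 \<le> n" shows "Bp n s n = (if s = 0 then 1 else s)"
proof (cases "s = 0")
  case True then show ?thesis using Bv[of n n s] assms(2) by simp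
next
  case False
  have "s \<le> n - s" "s \<noteq> 1" using S_D[OF assms(1)] by auto
  then have "\<not> n \<le> n - s" "s \<le> n" using False by auto
  then show ?thesis using Bv[of n n s] assms(2) False by simp
qed

lemma blk_1: assumes "a \<in> V k" "1 \<le> k" "k < n" shows "blk n k a 1 < n"
proof -
  have "a 1 \<le> k" using perm_facts(2)[OF V_D(1)[OF assms(1)], of 1] assms by auto
  then show ?thesis unfolding blk_def using assms by auto
qed

lemma blk_n: assumes "k < n" shows "blk n k a n = k + 1"
  unfolding blk_def using assms by auto

lemma inj_blk: assumes "k < n" shows "inj_on (blk n k) (V k)"
proof (rule inj_onI)
  fix a b assume ab: "a \<in> V k" "b \<in> V k" "blk n k a = blk n k b"
  show "a = b"
  proof
    fix i
    show "a i = b i"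
    proof (cases "k < i")
      case True
      then show ?thesis using perm_facts(3)[OF V_D(1)[OF ab(1)], of i] perm_facts(3)[OF V_D(1)[OF ab(2)], of i] by auto
    next
      case False
      then have "blk n k a i = a i" "blk n k b i = b i" unfolding blk_def by auto
      then show ?thesis using ab(3) by metis
    qed
  qed
qed

lemma inj_Bp: assumes "1 \<le> n" shows "inj_on (Bp n) (S n)"
proof (rule inj_onI)
  fix s t assume st: "s \<in> S n" "t \<in> S n" "Bp n s = Bp n t"
  then have "Bp n s n = Bp n t n" by simp
  then have "(if s = 0 then 1 else s) = (if t = 0 then 1 else t)" using Bp_n[OF st(1) assms] Bp_n[OF st(2) assms] by simp
  moreover have "s \<noteq> 1" "t \<noteq> 1" using S_D[OF st(1)] S_D[OF st(2)] by auto
  ultimately show "s = t" by (cases "s = 0"; cases "t = 0") simp_all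
qed

lemma card_rec:
  assumes n: "1 \<le> n"
  shows "card (V n) = card (S n) + (\<Sum>k\<in>{1..<n}. card (V k))"
proof -
  have fin1: "finite (Bp n ` S n)" unfolding S_def by simp
  have fin2: "finite (\<Union>k\<in>{1..<n}. blk n k ` V k)" using finite_V by auto
  have disj: "Bp n ` S n \<inter> (\<Union>k\<in>{1..<n}. blk n k ` V k) = {}"
  proof -
    { fix p assume "p \<in> Bp n ` S n" "p \<in> (\<Union>k\<in>{1..<n}. blk n k ` V k)"
      then obtain s k a where "s \<in> S n" "p = Bp n s" "k \<in> {1..<n}" "a \<in> V k" "p = blk n k a" by blast
      then have False using Bp_1[of s n] blk_1[of a k n] n by auto }
    then show ?thesis by blast
  qed
  have cu: "card (\<Union>k\<in>{1..<n}. blk n k ` V k) = (\<Sum>k\<in>{1..<n}. card (blk n k ` V k))"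
  proof (rule card_UN_disjoint)
    show "finite {1..<n}" by simp
    show "\<forall>i\<in>{1..<n}. finite (blk n i ` V i)" using finite_V by auto
    show "\<forall>i\<in>{1..<n}. \<forall>j\<in>{1..<n}. i \<noteq> j \<longrightarrow> blk n i ` V i \<inter> blk n j ` V j = {}"
    proof (intro ballI impI)
      fix i j assume ij: "i \<in> {1..<n}" "j \<in> {1..<n}" "i \<noteq> j"
      { fix p assume "p \<in> blk n i ` V i" "p \<in> blk n j ` V j"
        then obtain a b where "p = blk n i a" "p = blk n j b" by blast
        then have "i + 1 = j + 1" using blk_n[of i n a] blk_n[of j n b] ij by auto
        then have False using ij by auto }
      then show "blk n i ` V i \<inter> blk n j ` V j = {}" by blast
    qed
  qed
  have A: "card (V n) = card (Bp n ` S n) + card (\<Union>k\<in>{1..<n}. blk n k ` V k)"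
    unfolding V_eq[OF n] by (rule card_Un_disjoint[OF fin1 fin2 disj])
  have B: "card (Bp n ` S n) = card (S n)" by (rule card_image[OF inj_Bp[OF n]])
  have C: "(\<Sum>k\<in>{1..<n}. card (blk n k ` V k)) = (\<Sum>k\<in>{1..<n}. card (V k))"
  proof (rule sum.cong)
    fix k assume "k \<in> {1..<n}"
    then show "card (blk n k ` V k) = card (V k)" using card_image[OF inj_blk[of k n]] by auto
  qed simp
  show ?thesis using A B C cu by simp
qed

lemma F_step:
  assumes "2 \<le> n"
  shows "card (V (n + 1)) + n div 2 = (n + 1) div 2 + 2 * card (V n)"
proof -
  have a: "card (V (n+1)) = (n + 1) div 2 + (\<Sum>k\<in>{1..<n+1}. card (V k))"
    using card_rec[of "n+1"] card_S[of "n+1"] assms by auto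
  have b: "card (V n) = n div 2 + (\<Sum>k\<in>{1..<n}. card (V k))"
    using card_rec[of n] card_S[of n] assms by auto
  have c: "(\<Sum>k\<in>{1..<n+1}. card (V k)) = (\<Sum>k\<in>{1..<n}. card (V k)) + card (V n)"
    using assms by (simp add: sum.atLeastLessThan_Suc)
  show ?thesis using a b c by simp
qed

lemma F1: "card (V 1) = 1" using card_rec[of 1] card_S[of 1] by simp
lemma F2: "card (V 2) = 2"
proof -
  have "{1..<2::nat} = {1}" by auto
  then show ?thesis using card_rec[of 2] card_S[of 2] F1 by simp
qed

lemma F_closed: "3 * card (V (2 * m + 2)) + 1 = 7 * 4 ^ m \<and> card (V (2 * m + 3)) = 2 * card (V (2 * m + 2))"
proof (induction m)
  case 0
  have "card (V (2 + 1)) + 2 div 2 = (2 + 1) div 2 + 2 * card (V 2)" by (rule F_step) simp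
  then have h: "card (V 3) = 2 * card (V 2)" by simp
  have e1: "2 * 0 + 2 = (2::nat)" "2 * 0 + 3 = (3::nat)" "(4::nat) ^ 0 = 1" by simp_all
  show ?case unfolding e1 using F2 h by simp
next
  case (Suc m)
  have s1: "card (V ((2 * m + 3) + 1)) + (2 * m + 3) div 2 = ((2 * m + 3) + 1) div 2 + 2 * card (V (2 * m + 3))"
    by (rule F_step) simp
  have s2: "card (V ((2 * m + 4) + 1)) + (2 * m + 4) div 2 = ((2 * m + 4) + 1) div 2 + 2 * card (V (2 * m + 4))"
    by (rule F_step) simp
  have d1: "(2 * m + 3) div 2 = m + 1" "((2 * m + 3) + 1) div 2 = m + 2" by presburger+
  have d2: "(2 * m + 4) div 2 = m + 2" "((2 * m + 4) + 1) div 2 = m + 2" by presburger+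
  have t1: "2 * m + 3 + 1 = 2 * m + 4" "2 * m + 4 + 1 = 2 * m + 5" by simp_all
  have e1: "card (V (2 * m + 4)) = 2 * card (V (2 * m + 3)) + 1" using s1 unfolding d1 t1 by linarith
  have e2: "card (V (2 * m + 5)) = 2 * card (V (2 * m + 4))" using s2 unfolding d2 t1 by linarith
  have t2: "2 * Suc m + 2 = 2 * m + 4" "2 * Suc m + 3 = 2 * m + 5" by simp_all
  have p4: "(7::nat) * 4 ^ Suc m = 4 * (7 * 4 ^ m)" by simp
  have i1: "3 * card (V (2 * m + 2)) + 1 = 7 * 4 ^ m" "card (V (2 * m + 3)) = 2 * card (V (2 * m + 2))"
    using Suc.IH by auto
  show ?case unfolding t2 p4 using e1 e2 i1 by (intro conjI; linarith)
qed

definition w :: "nat \<Rightarrow> nat \<Rightarrow> nat" where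
  "w n i = (if 1 \<le> i \<and> i \<le> n then n + 1 - i else i)"

definition phi :: "nat \<Rightarrow> (nat \<Rightarrow> nat) \<Rightarrow> nat \<Rightarrow> nat" where
  "phi n p = (\<lambda>i. w n (p (w n i)))"

definition V2 :: "nat \<Rightarrow> (nat \<Rightarrow> nat) set" where
  "V2 n = {p \<in> perms n. avoids n p [3,1,2] \<and> avoids n p [2,3,1,4] \<and> avoids n (p \<circ> p) [3,1,2]}"

lemma ww: "w n (w n i) = i"
  unfolding w_def by auto

lemma w_perm: "w n permutes {1..n}"
proof (rule mk_perm)
  show "inj_on (w n) {1..n}" by (metis inj_onI ww)
  show "\<And>i. 1 \<le> i \<Longrightarrow> i \<le> n \<Longrightarrow> 1 \<le> w n i \<and> w n i \<le> n" unfolding w_def by auto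
  show "\<And>i. \<not> (1 \<le> i \<and> i \<le> n) \<Longrightarrow> w n i = i"
  proof -
    fix i assume h: "\<not> (1 \<le> i \<and> i \<le> n)"
    show "w n i = i" unfolding w_def by (rule if_not_P[OF h])
  qed
qed

lemma phi_perm: assumes "p permutes {1..n}" shows "phi n p permutes {1..n}"
proof -
  have "phi n p = (w n \<circ> p) \<circ> w n" by (rule ext) (simp add: phi_def)
  then show ?thesis using permutes_compose[OF w_perm permutes_compose[OF assms w_perm]] by simp
qed

lemma phi_val:
  assumes "p permutes {1..n}" "1 \<le> a" "a \<le> n"
  shows "phi n p (n + 1 - a) = n + 1 - p a"
proof -
  have "w n (n + 1 - a) = a" unfolding w_def using assms by auto
  moreover have "1 \<le> p a" "p a \<le> n" using perm_facts(2)[OF assms(1)] assms by auto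
  ultimately show ?thesis unfolding phi_def w_def by auto
qed

lemma phiphi: "phi n (phi n p) = p"
  by (rule ext) (simp add: phi_def ww)

lemma phi_comp: "phi n p \<circ> phi n p = phi n (p \<circ> p)"
  by (rule ext) (simp add: phi_def ww)

lemma permD: assumes "p permutes {1..n}" shows "inj_on p {1..n}" "\<And>i. 1 \<le> i \<Longrightarrow> i \<le> n \<Longrightarrow> 1 \<le> p i \<and> p i \<le> n"
  using perm_facts[OF assms] by auto

lemma T1:
  assumes perm: "p permutes {1..n}" and c: "contains n p [2,3,1]"
  shows "contains n (phi n p) [3,1,2]"
proof -
  obtain a b c where h: "1 \<le> a" "a < b" "b < c" "c \<le> n" "p c < p a" "p a < p b"
    using c unfolding c231[OF permD(1)[OF perm]] by blast
  note pv = permD(2)[OF perm]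
  have v: "phi n p (n + 1 - c) = n + 1 - p c" "phi n p (n + 1 - b) = n + 1 - p b" "phi n p (n + 1 - a) = n + 1 - p a"
    using phi_val[OF perm] h by auto
  have "\<exists>x y z. 1 \<le> x \<and> x < y \<and> y < z \<and> z \<le> n \<and> phi n p y < phi n p z \<and> phi n p z < phi n p x"
  proof (intro exI conjI)
    show "1 \<le> n + 1 - c" "n + 1 - c < n + 1 - b" "n + 1 - b < n + 1 - a" "n + 1 - a \<le> n" using h by auto
    show "phi n p (n + 1 - b) < phi n p (n + 1 - a)" "phi n p (n + 1 - a) < phi n p (n + 1 - c)"
      unfolding v using h pv[of a] pv[of b] pv[of c] by auto
  qed
  then show ?thesis unfolding c312[OF permD(1)[OF phi_perm[OF perm]]] .
qed

lemma T2:
  assumes perm: "p permutes {1..n}" and c: "contains n p [3,1,2]"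
  shows "contains n (phi n p) [2,3,1]"
proof -
  obtain a b c where h: "1 \<le> a" "a < b" "b < c" "c \<le> n" "p b < p c" "p c < p a"
    using c unfolding c312[OF permD(1)[OF perm]] by blast
  note pv = permD(2)[OF perm]
  have v: "phi n p (n + 1 - c) = n + 1 - p c" "phi n p (n + 1 - b) = n + 1 - p b" "phi n p (n + 1 - a) = n + 1 - p a"
    using phi_val[OF perm] h by auto
  have "\<exists>x y z. 1 \<le> x \<and> x < y \<and> y < z \<and> z \<le> n \<and> phi n p z < phi n p x \<and> phi n p x < phi n p y"
  proof (intro exI conjI)
    show "1 \<le> n + 1 - c" "n + 1 - c < n + 1 - b" "n + 1 - b < n + 1 - a" "n + 1 - a \<le> n" using h by auto
    show "phi n p (n + 1 - a) < phi n p (n + 1 - c)" "phi n p (n + 1 - c) < phi n p (n + 1 - b)"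
      unfolding v using h pv[of a] pv[of b] pv[of c] by auto
  qed
  then show ?thesis unfolding c231[OF permD(1)[OF phi_perm[OF perm]]] .
qed

lemma T3:
  assumes perm: "p permutes {1..n}" and c: "contains n p [1,4,2,3]"
  shows "contains n (phi n p) [2,3,1,4]"
proof -
  obtain a b c d where h: "1 \<le> a" "a < b" "b < c" "c < d" "d \<le> n" "p a < p c" "p c < p d" "p d < p b"
    using c unfolding c1423[OF permD(1)[OF perm]] by blast
  note pv = permD(2)[OF perm]
  have v: "phi n p (n + 1 - d) = n + 1 - p d" "phi n p (n + 1 - c) = n + 1 - p c"
    "phi n p (n + 1 - b) = n + 1 - p b" "phi n p (n + 1 - a) = n + 1 - p a"
    using phi_val[OF perm] h by auto
  have "\<exists>x y z u. 1 \<le> x \<and> x < y \<and> y < z \<and> z < u \<and> u \<le> n \<and> phi n p z < phi n p x \<and> phi n p x < phi n p y \<and> phi n p y < phi n p u"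
  proof (intro exI conjI)
    show "1 \<le> n + 1 - d" "n + 1 - d < n + 1 - c" "n + 1 - c < n + 1 - b" "n + 1 - b < n + 1 - a" "n + 1 - a \<le> n" using h by auto
    show "phi n p (n + 1 - b) < phi n p (n + 1 - d)" "phi n p (n + 1 - d) < phi n p (n + 1 - c)"
      "phi n p (n + 1 - c) < phi n p (n + 1 - a)"
      unfolding v using h pv[of a] pv[of b] pv[of c] pv[of d] by auto
  qed
  then show ?thesis unfolding c2314[OF permD(1)[OF phi_perm[OF perm]]] .
qed

lemma T4:
  assumes perm: "p permutes {1..n}" and c: "contains n p [2,3,1,4]"
  shows "contains n (phi n p) [1,4,2,3]"
proof -
  obtain a b c d where h: "1 \<le> a" "a < b" "b < c" "c < d" "d \<le> n" "p c < p a" "p a < p b" "p b < p d"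
    using c unfolding c2314[OF permD(1)[OF perm]] by blast
  note pv = permD(2)[OF perm]
  have v: "phi n p (n + 1 - d) = n + 1 - p d" "phi n p (n + 1 - c) = n + 1 - p c"
    "phi n p (n + 1 - b) = n + 1 - p b" "phi n p (n + 1 - a) = n + 1 - p a"
    using phi_val[OF perm] h by auto
  have "\<exists>x y z u. 1 \<le> x \<and> x < y \<and> y < z \<and> z < u \<and> u \<le> n \<and> phi n p x < phi n p z \<and> phi n p z < phi n p u \<and> phi n p u < phi n p y"
  proof (intro exI conjI)
    show "1 \<le> n + 1 - d" "n + 1 - d < n + 1 - c" "n + 1 - c < n + 1 - b" "n + 1 - b < n + 1 - a" "n + 1 - a \<le> n" using h by auto
    show "phi n p (n + 1 - d) < phi n p (n + 1 - b)" "phi n p (n + 1 - b) < phi n p (n + 1 - a)"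
      "phi n p (n + 1 - a) < phi n p (n + 1 - c)"
      unfolding v using h pv[of a] pv[of b] pv[of c] pv[of d] by auto
  qed
  then show ?thesis unfolding c1423[OF permD(1)[OF phi_perm[OF perm]]] .
qed

lemma phi_V: assumes "p \<in> V n" shows "phi n p \<in> V2 n"
proof -
  have perm: "p permutes {1..n}" using assms unfolding V_def perms_def by auto
  have pp: "p \<circ> p permutes {1..n}" by (rule permutes_compose[OF perm perm])
  have av: "\<not> contains n p [2,3,1]" "\<not> contains n p [1,4,2,3]" "\<not> contains n (p \<circ> p) [2,3,1]"
    using assms unfolding V_def avoids_def by auto
  have "\<not> contains n (phi n p) [3,1,2]" using T2[OF phi_perm[OF perm]] av(1) phiphi by metis
  moreover have "\<not> contains n (phi n p) [2,3,1,4]" using T4[OF phi_perm[OF perm]] av(2) phiphi by metis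
  moreover have "\<not> contains n (phi n p \<circ> phi n p) [3,1,2]"
    unfolding phi_comp using T2[OF phi_perm[OF pp]] av(3) phiphi by metis
  ultimately show ?thesis using phi_perm[OF perm] unfolding V2_def avoids_def perms_def by auto
qed

lemma phi_V2: assumes "p \<in> V2 n" shows "phi n p \<in> V n"
proof -
  have perm: "p permutes {1..n}" using assms unfolding V2_def perms_def by auto
  have pp: "p \<circ> p permutes {1..n}" by (rule permutes_compose[OF perm perm])
  have av: "\<not> contains n p [3,1,2]" "\<not> contains n p [2,3,1,4]" "\<not> contains n (p \<circ> p) [3,1,2]"
    using assms unfolding V2_def avoids_def by auto
  have "\<not> contains n (phi n p) [2,3,1]" using T1[OF phi_perm[OF perm]] av(1) phiphi by metis
  moreover have "\<not> contains n (phi n p) [1,4,2,3]" using T3[OF phi_perm[OF perm]] av(2) phiphi by metis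
  moreover have "\<not> contains n (phi n p \<circ> phi n p) [2,3,1]"
    unfolding phi_comp using T1[OF phi_perm[OF pp]] av(3) phiphi by metis
  ultimately show ?thesis using phi_perm[OF perm] unfolding V_def avoids_def perms_def by auto
qed

lemma finite_V2: "finite (V2 n)"
proof (rule finite_subset)
  show "V2 n \<subseteq> {p. p permutes {1..n}}" unfolding V2_def perms_def by auto
  show "finite {p. p permutes {1..n::nat}}" by (rule finite_permutations) simp
qed

lemma card_V2: "card (V2 n) = card (V n)"
proof (rule antisym)
  have inj: "inj_on (phi n) A" for A by (metis inj_onI phiphi)
  show "card (V2 n) \<le> card (V n)"
    by (rule card_inj_on_le[OF inj _ finite_V]) (auto intro: phi_V2)
  show "card (V n) \<le> card (V2 n)"
    by (rule card_inj_on_le[OF inj _ finite_V2]) (auto intro: phi_V)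
qed

lemma cV: "c n [2,3,1] [1,4,2,3] [2,3,1] = card (V n)" unfolding c_def V_def by simp

lemma cV2: "c n [3,1,2] [2,3,1,4] [3,1,2] = card (V2 n)" unfolding c_def V2_def by simp

lemma part1: "c n [2,3,1] [1,4,2,3] [2,3,1] = c n [3,1,2] [2,3,1,4] [3,1,2]"
  unfolding cV cV2 card_V2 by (rule refl)

lemma even_real:
  assumes "1 \<le> k"
  shows "real (card (V (2 * k))) = 7 / 3 * 4 ^ (k - 1) - 1 / 3"
proof -
  obtain j where j: "k = j + 1" using assms by (metis add.commute le_Suc_ex Suc_eq_plus1_left)
  have e: "2 * k = 2 * j + 2" "k - 1 = j" using j by auto
  have "3 * card (V (2 * j + 2)) + 1 = 7 * 4 ^ j" using F_closed[of j] by blast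
  then have "3 * card (V (2 * k)) + 1 = 7 * 4 ^ (k - 1)" unfolding e .
  then have "real (3 * card (V (2 * k)) + 1) = real (7 * 4 ^ (k - 1))" by simp
  then have "3 * real (card (V (2 * k))) + 1 = 7 * 4 ^ (k - 1)" by simp
  then show ?thesis by linarith
qed

lemma odd_real:
  assumes "1 \<le> k"
  shows "real (card (V (2 * k + 1))) = 14 / 3 * 4 ^ (k - 1) - 2 / 3"
proof -
  obtain j where j: "k = j + 1" using assms by (metis add.commute le_Suc_ex Suc_eq_plus1_left)
  have e: "2 * k + 1 = 2 * j + 3" "2 * k = 2 * j + 2" using j by auto
  have "card (V (2 * j + 3)) = 2 * card (V (2 * j + 2))" using F_closed[of j] by blast
  moreover have "card (V (2 * k + 1)) = card (V (2 * j + 3))" using arg_cong[where f = "\<lambda>x. card (V x)", OF e(1)] .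
  moreover have "card (V (2 * k)) = card (V (2 * j + 2))" using arg_cong[where f = "\<lambda>x. card (V x)", OF e(2)] .
  ultimately have "card (V (2 * k + 1)) = 2 * card (V (2 * k))" by simp
  then have "real (card (V (2 * k + 1))) = 2 * real (card (V (2 * k)))" by simp
  then show ?thesis using even_real[OF assms] by simp
qed

theorem theorem4p2:
  fixes n :: nat
  assumes "n > 1"
  shows "c n [2,3,1] [1,4,2,3] [2,3,1] = c n [3,1,2] [2,3,1,4] [3,1,2]
       \<and> (\<forall>k::nat. n = 2 * k \<longrightarrow>
            real (c n [2,3,1] [1,4,2,3] [2,3,1]) = 7 / 3 * 4 ^ (k - 1) - 1 / 3)
       \<and> (\<forall>k::nat. n = 2 * k + 1 \<longrightarrow>
            real (c n [2,3,1] [1,4,2,3] [2,3,1]) = 14 / 3 * 4 ^ (k - 1) - 2 / 3)"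
  using part1 even_real odd_real assms unfolding cV by auto

end
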